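(* Let $p$ be prime and $A\subset\mathbb{Z}_{p^2}\times\mathbb{Z}_p$ be a spectral set with $\#A>p^2$. Then $A=\mathbb{Z}_{p^2}\times\mathbb{Z}_p$.
   Context: For $b=(b_1,b_2)\in G=\mathbb{Z}_{p^2}\times\mathbb{Z}_p$ let $\chi_b(a_1,a_2)=e^{2\pi i(a_1b_1/p^2+a_2b_2/p)}$. $A\subset G$ is a spectral set if there is $B\subset G$ such that $\{\chi_b|_A:b\in B\}$ is an orthogonal basis of $L^2(A)$ (counting measure). *)

theory Defs
  imports Complex_Main "HOL-Computational_Algebra.Primes"
begin

definition grp :: "nat \<Rightarrow> (nat \<times> nat) set" where
  "grp p = {..<p^2} \<times> {..<p}"

definition chr :: "nat \<Rightarrow> nat \<times> nat \<Rightarrow> nat \<times> nat \<Rightarrow> complex" where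
  "chr p b a = exp (2 * pi * \<i> *
     complex_of_real (real (fst a * fst b) / real (p^2) + real (snd a * snd b) / real p))"

definition l2_inner :: "(nat \<times> nat) set \<Rightarrow> (nat \<times> nat \<Rightarrow> complex) \<Rightarrow> (nat \<times> nat \<Rightarrow> complex) \<Rightarrow> complex" where
  "l2_inner A f g = (\<Sum>a\<in>A. f a * cnj (g a))"

definition spectral :: "nat \<Rightarrow> (nat \<times> nat) set \<Rightarrow> bool" where
  "spectral p A \<longleftrightarrow> A \<subseteq> grp p \<and>
     (\<exists>B \<subseteq> grp p.
        (\<forall>b\<in>B. \<forall>b'\<in>B. b \<noteq> b' \<longrightarrow> l2_inner A (chr p b) (chr p b') = 0) \<and>
        (\<forall>f :: nat \<times> nat \<Rightarrow> complex. \<exists>c :: nat \<times> nat \<Rightarrow> complex.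
            \<forall>a\<in>A. f a = (\<Sum>b\<in>B. c b * chr p b a)))"

end

theory Submission
  imports Defs "HOL-Number_Theory.Cong" "HOL-Computational_Algebra.Polynomial_Factorial" "HOL-Analysis.Analysis"
begin

definition ev :: "int poly \<Rightarrow> complex \<Rightarrow> complex" where
  "ev P x = poly (map_poly of_int P) x"

lemma mp_mult: "map_poly (of_int::int\<Rightarrow>complex) (P * Q) = map_poly of_int P * map_poly of_int Q"
  by (rule poly_eqI) (simp add: coeff_map_poly coeff_mult of_int_sum)

lemma mp_add: "map_poly (of_int::int\<Rightarrow>complex) (P + Q) = map_poly of_int P + map_poly of_int Q"
  by (rule poly_eqI) (simp add: coeff_map_poly)

lemma mp_diff: "map_poly (of_int::int\<Rightarrow>complex) (P - Q) = map_poly of_int P - map_poly of_int Q"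
  by (rule poly_eqI) (simp add: coeff_map_poly)

lemma ev_mult: "ev (P * Q) x = ev P x * ev Q x"
  by (simp add: ev_def mp_mult)
lemma ev_add: "ev (P + Q) x = ev P x + ev Q x"
  by (simp add: ev_def mp_add)
lemma ev_diff: "ev (P - Q) x = ev P x - ev Q x"
  by (simp add: ev_def mp_diff)
lemma ev_const: "ev [:c:] x = of_int c"
  by (simp add: ev_def map_poly_pCons)
lemma ev_one: "ev 1 x = 1"
  using ev_const[of 1 x] by (simp add: one_pCons)
lemma ev_power: "ev (P ^ n) x = ev P x ^ n"
proof (induction n)
  case 0 then show ?case by (simp add: ev_one)
next
  case (Suc n) then show ?case by (simp add: ev_mult)
qed
lemma ev_zero: "ev 0 x = 0"
  by (simp add: ev_def)
lemma ev_sum: "ev (\<Sum>i\<in>S. f i) x = (\<Sum>i\<in>S. ev (f i) x)"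
  by (induction S rule: infinite_finite_induct) (simp_all add: ev_add ev_zero)
lemma ev_L: "ev [:1,1:] x = x + 1"
  by (simp add: ev_def map_poly_pCons)
lemma ev_smult: "ev (smult c P) x = of_int c * ev P x"
proof -
  have "smult c P = [:c:] * P" by simp
  then show ?thesis by (simp only: ev_mult ev_const)
qed

subsection \<open>Eisenstein\<close>

lemma eis_aux:
  fixes F G H :: "int poly" and p :: int
  assumes pr: "prime p" and FGH: "F = G * H" and G0: "p dvd coeff G 0"
    and H0: "\<not> p dvd coeff H 0" and lG: "\<not> p dvd lead_coeff G"
    and deg: "degree G < degree F" and dv: "\<forall>i<degree F. p dvd coeff F i"
  shows False
proof -
  have ex: "\<exists>i. \<not> p dvd coeff G i" using lG by blast
  define i where "i = (LEAST i. \<not> p dvd coeff G i)"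
  have i1: "\<not> p dvd coeff G i" unfolding i_def by (rule LeastI_ex[OF ex])
  have i2: "\<forall>j<i. p dvd coeff G j" unfolding i_def using not_less_Least by blast
  have "coeff G i \<noteq> 0" using i1 by auto
  then have ile: "i \<le> degree G" by (rule le_degree)
  have "coeff F i = (\<Sum>j\<le>i. coeff G j * coeff H (i - j))" by (simp add: FGH coeff_mult)
  also have "\<dots> = (\<Sum>j<i. coeff G j * coeff H (i-j)) + coeff G i * coeff H 0"
    by (simp add: lessThan_Suc_atMost[symmetric])
  finally have eq: "coeff F i = (\<Sum>j<i. coeff G j * coeff H (i-j)) + coeff G i * coeff H 0" .
  have d1: "p dvd (\<Sum>j<i. coeff G j * coeff H (i-j))"
    by (rule dvd_sum) (use i2 in auto)
  have d2: "p dvd coeff F i" using dv ile deg by auto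
  have "p dvd coeff G i * coeff H 0" using eq d1 d2 by (metis dvd_add_right_iff)
  then show False using pr i1 H0 prime_dvd_mult_iff by blast
qed

lemma eisenstein:
  fixes F G H :: "int poly" and p :: int
  assumes pr: "prime p" and lc: "lead_coeff F = 1" and c0: "coeff F 0 = p"
    and dv: "\<forall>i<degree F. p dvd coeff F i" and FGH: "F = G * H"
    and dG: "degree G \<noteq> 0" and dH: "degree H \<noteq> 0"
  shows False
proof -
  have Fnz: "F \<noteq> 0" using lc by auto
  then have nz: "G \<noteq> 0" "H \<noteq> 0" using FGH by auto
  have degF: "degree F = degree G + degree H" using FGH degree_mult_eq nz by blast
  have lcGH: "lead_coeff G * lead_coeff H = 1" using lc FGH lead_coeff_mult by metis
  have np1: "\<not> p dvd 1" using pr not_prime_unit by blast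
  have lG: "\<not> p dvd lead_coeff G" and lH: "\<not> p dvd lead_coeff H"
    using lcGH np1 by (metis dvd_mult dvd_mult2)+
  have c00: "coeff G 0 * coeff H 0 = p" using c0 FGH by (simp add: coeff_mult_0)
  have pnz: "p \<noteq> 0" using pr by auto
  have notboth: "\<not> (p dvd coeff G 0 \<and> p dvd coeff H 0)"
  proof
    assume "p dvd coeff G 0 \<and> p dvd coeff H 0"
    then have "p * p dvd p * 1" using c00 by (metis mult.right_neutral mult_dvd_mono)
    then show False using np1 pnz by (simp add: dvd_times_left_cancel_iff)
  qed
  have "p dvd coeff G 0 * coeff H 0" using c00 by simp
  then have "p dvd coeff G 0 \<or> p dvd coeff H 0" using pr prime_dvd_mult_iff by blast
  then show False
  proof
    assume a: "p dvd coeff G 0"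
    show False
      by (rule eis_aux[OF pr FGH a _ lG]) (use notboth a degF dH dv in auto)
  next
    assume a: "p dvd coeff H 0"
    show False
      by (rule eis_aux[OF pr _ a _ lH, of F G]) (use notboth a degF dG dv FGH in \<open>auto simp: mult.commute\<close>)
  qed
qed

subsection \<open>The shifted cyclotomic polynomial\<close>

definition Fp :: "nat \<Rightarrow> int poly" where
  "Fp p = (\<Sum>k<p. [:1,1:] ^ (p*k))"

lemma coeff_Lpow_high: "m < i \<Longrightarrow> coeff ([:1,1:] ^ m :: int poly) i = 0"
  by (rule coeff_eq_0) (simp add: degree_linear_power)

lemma Fp_coeff_top:
  assumes "p \<ge> 1"
  shows "coeff (Fp p) (p*(p-1)) = 1"
proof -
  obtain m where m: "p = Suc m" using assms by (cases p) auto
  have "coeff (Fp p) (p*(p-1)) = (\<Sum>k<Suc m. coeff ([:1,1:] ^ (p*k)) (p*m))"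
    by (simp add: Fp_def coeff_sum m)
  also have "\<dots> = (\<Sum>k<m. coeff ([:1,1:] ^ (p*k) :: int poly) (p*m)) + 1"
    by (simp add: coeff_linear_power)
  also have "(\<Sum>k<m. coeff ([:1,1:] ^ (p*k) :: int poly) (p*m)) = 0"
  proof (rule sum.neutral, safe)
    fix k assume k: "k < m"
    have "p*k < p*m" using k assms by (simp add: mult_less_cancel1)
    then show "coeff ([:1,1:] ^ (p*k) :: int poly) (p*m) = 0" by (rule coeff_Lpow_high)
  qed
  finally show ?thesis by simp
qed

lemma Fp_coeff_high:
  assumes "p \<ge> 1" "p*(p-1) < i"
  shows "coeff (Fp p) i = 0"
proof -
  have "coeff (Fp p) i = (\<Sum>k<p. coeff ([:1,1:] ^ (p*k) :: int poly) i)"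
    by (simp add: Fp_def coeff_sum)
  also have "\<dots> = 0"
  proof (rule sum.neutral, safe)
    fix k assume "k < p"
    then have "p * k \<le> p * (p-1)" by simp
    then show "coeff ([:1,1:] ^ (p*k) :: int poly) i = 0"
      using assms(2) by (intro coeff_Lpow_high) linarith
  qed
  finally show ?thesis .
qed

lemma Fp_degree: "p \<ge> 1 \<Longrightarrow> degree (Fp p) = p*(p-1)"
  by (metis Fp_coeff_high Fp_coeff_top degree_le le_antisym le_degree zero_neq_one)

lemma Fp_lead: "p \<ge> 1 \<Longrightarrow> lead_coeff (Fp p) = 1"
  by (metis Fp_degree Fp_coeff_top)

lemma Fp_coeff0: "coeff (Fp p) 0 = int p"
  by (simp add: Fp_def coeff_sum coeff_0_power)

lemma binom_D:
  fixes y :: "int poly"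
  assumes pr: "prime p"
  shows "\<exists>g. (y+1)^p - y^p - 1 = of_nat p * g"
proof -
  have p2: "p \<ge> 2" using pr prime_ge_2_nat by blast
  have "(y+1)^p = (\<Sum>k\<le>p. of_nat (p choose k) * y^k * 1^(p-k))"
    by (rule binomial_ring)
  also have "{..p} = insert 0 (insert p {1..<p})" using p2 by auto
  also have "(\<Sum>k\<in>insert 0 (insert p {1..<p}). of_nat (p choose k) * y^k * 1^(p-k))
      = 1 + (y^p + (\<Sum>k\<in>{1..<p}. of_nat (p choose k) * y^k))"
    using p2 by (simp add: sum.insert)
  finally have e: "(y+1)^p - y^p - 1 = (\<Sum>k\<in>{1..<p}. of_nat (p choose k) * y^k)" by simp
  define g where "g = (\<Sum>k\<in>{1..<p}. of_nat ((p choose k) div p) * y^k)"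
  have "of_nat p * g = (\<Sum>k\<in>{1..<p}. of_nat p * (of_nat ((p choose k) div p) * y^k))"
    by (simp add: g_def sum_distrib_left)
  also have "\<dots> = (\<Sum>k\<in>{1..<p}. of_nat (p choose k) * y^k)"
  proof (rule sum.cong[OF refl])
    fix k assume k: "k \<in> {1..<p}"
    have "p dvd (p choose k)" using k pr p2 by (intro dvd_choose_prime) auto
    then have "p * ((p choose k) div p) = p choose k" by simp
    then have "(of_nat p * of_nat ((p choose k) div p) :: int poly) = of_nat (p choose k)"
      by (metis of_nat_mult)
    then show "of_nat p * (of_nat ((p choose k) div p) * y^k) = (of_nat (p choose k) * y^k :: int poly)"
      by (metis mult.assoc)
  qed
  finally show ?thesis using e by metis
qed

lemma D_pow:
  fixes a b g :: "'a::comm_ring_1"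
  assumes "a - b = c * g"
  shows "\<exists>h. a^n - b^n = c * h"
proof (induction n)
  case 0 then show ?case by (rule exI[of _ 0]) simp
next
  case (Suc n)
  then obtain h where h: "a^n - b^n = c * h" by blast
  have "a^Suc n - b^Suc n = a * (a^n - b^n) + (a - b) * b^n" by (simp add: algebra_simps)
  also have "\<dots> = c * (a * h + g * b^n)" using h assms by (simp add: algebra_simps)
  finally show ?case by blast
qed

lemma geom_ring:
  fixes a :: "'a::comm_ring_1"
  shows "(\<Sum>k<n. a^k) * (a - 1) = a^n - 1"
  by (induction n) (simp_all add: algebra_simps)

lemma Fp_dvd:
  assumes pr: "prime p" and i: "i < p*(p-1)"
  shows "int p dvd coeff (Fp p) i"
proof -
  have p2: "p \<ge> 2" using pr prime_ge_2_nat by blast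
  define X :: "int poly" where "X = monom 1 1"
  define L :: "int poly" where "L = [:1,1:]"
  have LX: "L = X + 1" by (simp add: L_def X_def monom_Suc one_pCons)
  have Xp: "\<And>k. X ^ k = monom 1 k" by (simp add: X_def monom_power)
  obtain g1 where g1: "L^p - X^p - 1 = of_nat p * g1"
    using binom_D[OF pr, of X] LX by auto
  obtain g2 where g2: "(X^p + 1)^p - (X^p)^p - 1 = of_nat p * g2"
    using binom_D[OF pr, of "X^p"] by auto
  obtain h where h: "(L^p)^p - (X^p+1)^p = of_nat p * h"
    using D_pow[of "L^p" "X^p+1" "of_nat p" g1 p] g1 by (auto simp: algebra_simps)
  have F: "Fp p = (\<Sum>k<p. (L^p)^k)" by (simp add: Fp_def L_def power_mult)
  have geo: "Fp p * (L^p - 1) = (L^p)^p - 1" unfolding F by (rule geom_ring)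
  define n where "n = p*(p-1)"
  have pp: "p * p = p + n" using p2 by (simp add: n_def algebra_simps)
  have "X^p * (Fp p - monom 1 n) = Fp p * X^p - (X^p)^p"
    by (simp add: algebra_simps Xp monom_power pp mult_monom)
  also have "\<dots> = ((L^p)^p - (X^p+1)^p) + ((X^p + 1)^p - (X^p)^p - 1) - Fp p * (L^p - X^p - 1)"
    using geo by (simp add: algebra_simps)
  also have "\<dots> = of_nat p * (h + g2 - Fp p * g1)"
    unfolding h g2 g1 by (simp add: algebra_simps)
  finally have E: "monom 1 p * (Fp p - monom 1 n) = of_nat p * (h + g2 - Fp p * g1)"
    by (simp add: Xp)
  have "coeff (monom 1 p * (Fp p - monom 1 n)) (p + i) = coeff (Fp p) i"
    using i by (simp add: coeff_monom_mult n_def)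
  also have "coeff (monom 1 p * (Fp p - monom 1 n)) (p + i) = int p * coeff (h + g2 - Fp p * g1) (p+i)"
    by (simp add: E of_nat_poly)
  finally show ?thesis by (metis dvd_triv_left)
qed

lemma Fp_factor:
  assumes pr: "prime p" and eq: "Fp p = a * b"
  shows "degree a = 0 \<or> degree b = 0"
proof (rule ccontr)
  assume "\<not> (degree a = 0 \<or> degree b = 0)"
  then have d: "degree a \<noteq> 0" "degree b \<noteq> 0" by auto
  have p1: "p \<ge> 1" using pr prime_ge_1_nat by blast
  show False
  proof (rule eisenstein[of "int p" "Fp p" a b])
    show "prime (int p)" using pr by simp
    show "lead_coeff (Fp p) = 1" using Fp_lead[OF p1] .
    show "coeff (Fp p) 0 = int p" by (rule Fp_coeff0)
    show "\<forall>i<degree (Fp p). int p dvd coeff (Fp p) i"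
      using Fp_dvd[OF pr] Fp_degree[OF p1] by auto
  qed (use eq d in auto)
qed

subsection \<open>Transfer of roots\<close>

lemma root_transfer:
  assumes pr: "prime p" and y1: "ev (Fp p) y1 = 0" and y2: "ev (Fp p) y2 = 0"
    and Q: "ev Q y1 = 0"
  shows "ev Q y2 = 0"
proof -
  define I where "I = {R. R \<noteq> 0 \<and> ev R y1 = 0}"
  have p1: "p \<ge> 1" using pr prime_ge_1_nat by blast
  have Fnz: "Fp p \<noteq> 0" using Fp_lead[OF p1] by auto
  have FI: "Fp p \<in> I" using Fnz y1 by (simp add: I_def)
  obtain M0 where M0: "M0 \<in> I" and min: "\<forall>R. R \<in> I \<longrightarrow> degree M0 \<le> degree R"
    using ex_has_least_nat[of "\<lambda>R. R \<in> I" "Fp p" degree] FI by blast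
  define M where "M = primitive_part M0"
  have M0nz: "M0 \<noteq> 0" and M0y: "ev M0 y1 = 0" using M0 by (auto simp: I_def)
  have cM: "Polynomial.content M = 1" using M0nz by (simp add: M_def)
  have dM: "degree M = degree M0" by (simp add: M_def)
  have "ev M0 y1 = of_int (Polynomial.content M0) * ev M y1"
    using content_times_primitive_part[of M0] ev_smult unfolding M_def by metis
  then have My1: "ev M y1 = 0" using M0y M0nz by simp
  have Mnz: "M \<noteq> 0" using cM by auto
  have key: "\<exists>a s. a \<noteq> 0 \<and> smult a R = M * s" if R: "ev R y1 = 0" for R
  proof -
    obtain a s where a: "a \<noteq> 0" "smult a R = M * s + pseudo_mod R M"
      using pseudo_mod(1)[OF Mnz, of R] by blast
    have r: "pseudo_mod R M = 0 \<or> degree (pseudo_mod R M) < degree M"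
      using pseudo_mod(2)[OF Mnz] by blast
    have "pseudo_mod R M = smult a R - M * s" using a(2) by simp
    then have "ev (pseudo_mod R M) y1 = of_int a * ev R y1 - ev M y1 * ev s y1"
      by (simp add: ev_diff ev_smult ev_mult)
    then have ev0: "ev (pseudo_mod R M) y1 = 0" using R My1 by simp
    have "pseudo_mod R M = 0"
    proof (rule ccontr)
      assume nz: "pseudo_mod R M \<noteq> 0"
      then have "pseudo_mod R M \<in> I" using ev0 by (simp add: I_def)
      then have "degree M0 \<le> degree (pseudo_mod R M)" using min by blast
      then show False using r nz dM by linarith
    qed
    then show ?thesis using a by auto
  qed
  obtain a s where as: "a \<noteq> 0" "smult a (Fp p) = M * s" using key[OF y1] by blast
  have "fract_poly (smult a (Fp p)) = fract_poly M * fract_poly s" using as(2) by simp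
  then have "smult (to_fract a) (fract_poly (Fp p)) = fract_poly M * fract_poly s" by simp
  then have "fract_poly (Fp p) = fract_poly M * smult (inverse (to_fract a)) (fract_poly s)"
    using as(1) by (metis (no_types, lifting) mult_smult_right smult_smult field_class.field_inverse
        smult_1_left to_fract_eq_0_iff mult.commute)
  then have "fract_poly M dvd fract_poly (Fp p)" by (rule dvdI)
  then have "M dvd Fp p" using fract_poly_dvdD cM by blast
  then obtain t where t: "Fp p = M * t" by (rule dvdE)
  have "degree M = 0 \<or> degree t = 0" by (rule Fp_factor[OF pr t])
  moreover have "degree M \<noteq> 0"
  proof
    assume "degree M = 0"
    then obtain c where c: "M = [:c:]" by (rule degree_eq_zeroE)
    then have "c \<noteq> 0" using Mnz by auto
    moreover have "ev M y1 = of_int c" using c ev_const by simp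
    ultimately show False using My1 by simp
  qed
  ultimately have "degree t = 0" by blast
  then obtain c where c: "t = [:c:]" by (rule degree_eq_zeroE)
  have "c \<noteq> 0" using c t Fnz by auto
  moreover have "ev (Fp p) y2 = ev M y2 * of_int c" by (simp only: t c ev_mult ev_const)
  ultimately have My2: "ev M y2 = 0" using y2 by simp
  obtain a' s' where as': "a' \<noteq> 0" "smult a' Q = M * s'" using key[OF Q] by blast
  have "of_int a' * ev Q y2 = ev M y2 * ev s' y2"
    using as'(2) by (metis ev_smult ev_mult)
  then show ?thesis using My2 as'(1) by simp
qed

subsection \<open>Roots of unity\<close>

definition zz :: "nat \<Rightarrow> complex" where
  "zz p = exp (\<i> * of_real (2 * pi / real (p^2)))"

lemma zz_pow: "zz p ^ m = exp (\<i> * of_real (2 * pi * real m / real (p^2)))"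
proof -
  have "zz p ^ m = exp (of_nat m * (\<i> * of_real (2 * pi / real (p^2))))"
    by (simp only: zz_def exp_of_nat_mult)
  also have "of_nat m * (\<i> * of_real (2 * pi / real (p^2))) = \<i> * of_real (2 * pi * real m / real (p^2))"
    by simp
  finally show ?thesis .
qed

lemma zz_pow_eq_1:
  assumes "p > 0"
  shows "zz p ^ m = 1 \<longleftrightarrow> p^2 dvd m"
proof
  assume "p^2 dvd m"
  then obtain k where k: "m = p^2 * k" by blast
  have "zz p ^ (p^2) = exp (\<i> * (of_real pi * 2))"
    using assms by (simp add: zz_pow mult.commute)
  also have "\<dots> = 1" by (rule exp_two_pi_i')
  finally show "zz p ^ m = 1" by (simp add: k power_mult)
next
  assume "zz p ^ m = 1"
  then have "exp (\<i> * of_real (2 * pi * real m / real (p^2))) = 1" by (simp add: zz_pow)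
  then obtain n :: int where n: "2 * pi * real m / real (p^2) = of_int (2 * n) * pi"
    by (auto simp: exp_eq_1)
  have "real m = real (p^2) * of_int n"
    using n assms by (simp add: field_simps)
  then have "of_int (int m) = (of_int (int (p^2) * n) :: real)" by simp
  then have "int m = int (p^2) * n" by (simp only: of_int_eq_iff)
  then have "int (p^2) dvd int m" by simp
  then show "p^2 dvd m" by (simp only: of_nat_dvd_iff)
qed

lemma zz_mod: "p > 0 \<Longrightarrow> zz p ^ m = zz p ^ (m mod p^2)"
proof -
  assume p: "p > 0"
  have "zz p ^ m = zz p ^ (p^2 * (m div p^2) + m mod p^2)" by simp
  also have "\<dots> = (zz p ^ (p^2)) ^ (m div p^2) * zz p ^ (m mod p^2)"
    by (simp only: power_add power_mult)
  also have "zz p ^ (p^2) = 1" using zz_pow_eq_1[OF p] by simp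
  finally show ?thesis by simp
qed

lemma zz_cnj: "zz p ^ m * cnj (zz p ^ m) = 1"
proof -
  have "norm (zz p ^ m) = 1" by (simp add: zz_pow)
  then show ?thesis using complex_norm_square[of "zz p ^ m"] by simp
qed

lemma chr_zz:
  assumes "p > 0"
  shows "chr p b a = zz p ^ (fst a * fst b + p * (snd a * snd b))"
proof -
  have r: "real (fst a * fst b) / real (p^2) + real (snd a * snd b) / real p
      = real (fst a * fst b + p * (snd a * snd b)) / real (p^2)"
    using assms by (simp add: field_simps power2_eq_square)
  show ?thesis unfolding chr_def zz_pow r by (simp add: mult_ac)
qed

lemma geo_zero:
  fixes w :: complex
  assumes "w ^ n = 1" "w \<noteq> 1"
  shows "(\<Sum>k<n. w^k) = 0"
  using assms by (simp add: sum_gp_strict)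

lemma ev_Fp: "ev (Fp p) x = (\<Sum>k<p. (x+1)^(p*k))"
  by (simp add: Fp_def ev_sum ev_power ev_L)

lemma Fp_root:
  assumes pr: "prime p" and t: "\<not> p dvd t"
  shows "ev (Fp p) (zz p ^ t - 1) = 0"
proof -
  have p0: "p > 0" using pr prime_gt_0_nat by blast
  have "ev (Fp p) (zz p ^ t - 1) = (\<Sum>k<p. (zz p ^ (t*p))^k)"
    by (simp add: ev_Fp power_mult)
  also have "\<dots> = 0"
  proof (rule geo_zero)
    show "(zz p ^ (t*p)) ^ p = 1" using zz_pow_eq_1[OF p0]
      by (simp add: power_mult[symmetric] power2_eq_square mult.assoc)
    show "zz p ^ (t*p) \<noteq> 1"
    proof
      assume "zz p ^ (t*p) = 1"
      then have "p * p dvd t * p" using zz_pow_eq_1[OF p0] by (simp add: power2_eq_square)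
      then have "p dvd t" using p0 by (simp add: mult.commute)
      then show False using t by simp
    qed
  qed
  finally show ?thesis .
qed

lemma galois:
  assumes pr: "prime p" and s: "\<not> p dvd s"
    and z: "(\<Sum>a\<in>A. (zz p ^ s) ^ (f a)) = 0"
  shows "(\<Sum>a\<in>A. zz p ^ (f a)) = 0"
proof -
  define Q :: "int poly" where "Q = (\<Sum>a\<in>A. [:1,1:] ^ f a)"
  have evQ: "ev Q (w - 1) = (\<Sum>a\<in>A. w ^ f a)" for w
    by (simp add: Q_def ev_sum ev_power ev_L)
  have "ev Q (zz p ^ s - 1) = 0" using z evQ by simp
  moreover have p1: "\<not> p dvd 1" using pr by (metis not_prime_unit nat_dvd_1_iff_1 prime_nat_iff)
  ultimately have "ev Q (zz p ^ 1 - 1) = 0"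
    using root_transfer[OF pr Fp_root[OF pr s] Fp_root[OF pr p1]] by blast
  then show ?thesis using evQ[of "zz p"] by simp
qed

lemma mod_cancel_nat:
  assumes h: "((x::nat) + y) mod q = (x + z) mod q"
  shows "y mod q = z mod q"
proof -
  have hi: "(int x + int y) mod int q = (int x + int z) mod int q"
    using arg_cong[OF h, of int] by (simp add: of_nat_mod)
  have "(int x + int y + (- int x)) mod int q = (int x + int z + (- int x)) mod int q"
    by (rule mod_add_cong[OF hi refl])
  then have "int y mod int q = int z mod int q" by simp
  then have "int (y mod q) = int (z mod q)" by (simp add: of_nat_mod)
  then show ?thesis by (simp only: of_nat_eq_iff)
qed

lemma card_grp: "card (grp p) = p^2 * p"
  by (simp add: grp_def card_cartesian_product)

lemma finite_grp: "finite (grp p)"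
  by (simp add: grp_def)

lemma pigeon:
  assumes pr: "prime p" and B: "B \<subseteq> grp p" and cB: "card B > p^2"
    and d: "d \<in> grp p" "d \<noteq> (0,0)"
  shows "\<exists>b\<in>B. \<exists>b'\<in>B. b \<noteq> b' \<and> (\<exists>s. \<not> p dvd s \<and>
     fst b' mod p^2 = (fst b + s * fst d) mod p^2 \<and> snd b' mod p = (snd b + s * snd d) mod p)"
proof (rule ccontr)
  assume H: "\<not> ?thesis"
  define T where "T b = (\<lambda>t. ((fst b + t * fst d) mod p^2, (snd b + t * snd d) mod p)) ` {..<p}" for b
  have p0: "p > 0" using pr prime_gt_0_nat by blast
  have d1: "fst d < p^2" and d2: "snd d < p" using d by (auto simp: grp_def)
  have L0: False if s: "\<not> p dvd s" and e1: "(s * fst d) mod p^2 = 0" and e2: "(s * snd d) mod p = 0" for s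
  proof -
    have cp: "coprime p s" using pr s by (rule prime_imp_coprime)
    then have cq: "coprime (p^2) s" by simp
    have "p^2 dvd s * fst d" using e1 by auto
    then have "p^2 dvd fst d" using cq by (simp add: coprime_dvd_mult_right_iff)
    then have "fst d = 0" using d1 by (meson nat_dvd_not_less not_gr0)
    moreover have "p dvd s * snd d" using e2 by auto
    then have "p dvd snd d" using cp by (simp add: coprime_dvd_mult_right_iff)
    then have "snd d = 0" using d2 by (meson nat_dvd_not_less not_gr0)
    ultimately show False using d(2) by (simp add: prod_eq_iff)
  qed
  have Tsub: "T b \<subseteq> grp p" for b using p0 by (auto simp: T_def grp_def)
  have cardT: "card (T b) = p" for b
  proof -
    have "inj_on (\<lambda>t. ((fst b + t * fst d) mod p^2, (snd b + t * snd d) mod p)) {..<p}"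
    proof (rule inj_onI)
      have aux: False if tt: "t < t'" "t' < p" and
        e: "((fst b + t * fst d) mod p^2, (snd b + t * snd d) mod p) =
            ((fst b + t' * fst d) mod p^2, (snd b + t' * snd d) mod p)" for t t'
      proof -
        define s where "s = t' - t"
        have t': "t' = t + s" using tt by (simp add: s_def)
        have sp: "\<not> p dvd s" using tt by (simp add: s_def nat_dvd_not_less)
        have "(fst b + t * fst d + 0) mod p^2 = (fst b + t * fst d + s * fst d) mod p^2"
          using e by (simp add: t' algebra_simps)
        then have "0 mod p^2 = (s * fst d) mod p^2" by (rule mod_cancel_nat)
        then have e1: "(s * fst d) mod p^2 = 0" by simp
        have "(snd b + t * snd d + 0) mod p = (snd b + t * snd d + s * snd d) mod p"
          using e by (simp add: t' algebra_simps)
        then have "0 mod p = (s * snd d) mod p" by (rule mod_cancel_nat)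
        then have e2: "(s * snd d) mod p = 0" by simp
        show False by (rule L0[OF sp e1 e2])
      qed
      fix t t' assume "t \<in> {..<p}" "t' \<in> {..<p}" and
        e: "((fst b + t * fst d) mod p^2, (snd b + t * snd d) mod p) =
            ((fst b + t' * fst d) mod p^2, (snd b + t' * snd d) mod p)"
      then have tp: "t < p" "t' < p" by auto
      consider "t < t'" | "t = t'" | "t' < t" by linarith
      then show "t = t'"
      proof cases
        case 1 then show ?thesis using aux[OF 1 tp(2) e] by blast
      next
        case 3 then show ?thesis using aux[OF 3 tp(1) e[symmetric]] by blast
      qed
    qed
    then show ?thesis by (simp add: T_def card_image)
  qed
  have disj: "T b \<inter> T b' = {}" if b: "b \<in> B" "b' \<in> B" "b \<noteq> b'" for b b'
  proof (rule ccontr)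
    assume "T b \<inter> T b' \<noteq> {}"
    then obtain x where x1: "x \<in> T b" and x2: "x \<in> T b'" by blast
    from x1 obtain t where t: "t \<in> {..<p}" and
      xt: "x = ((fst b + t * fst d) mod p^2, (snd b + t * snd d) mod p)"
      unfolding T_def by (rule imageE)
    from x2 obtain t' where t': "t' \<in> {..<p}" and
      xt': "x = ((fst b' + t' * fst d) mod p^2, (snd b' + t' * snd d) mod p)"
      unfolding T_def by (rule imageE)
    have tt: "t < p" "t' < p" using t t' by auto
    have e1: "(fst b + t * fst d) mod p^2 = (fst b' + t' * fst d) mod p^2"
      using xt xt' by simp
    have e2: "(snd b + t * snd d) mod p = (snd b' + t' * snd d) mod p"
      using xt xt' by simp
    have bb: "fst b < p^2" "snd b < p" "fst b' < p^2" "snd b' < p"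
      using b B by (auto simp: grp_def)
    consider "t = t'" | "t < t'" | "t' < t" by linarith
    then show False
    proof cases
      case 1
      have "(t * fst d + fst b) mod p^2 = (t * fst d + fst b') mod p^2" using e1 1 by (simp add: add.commute)
      then have "fst b mod p^2 = fst b' mod p^2" by (rule mod_cancel_nat)
      then have f: "fst b = fst b'" using bb by simp
      have "(t * snd d + snd b) mod p = (t * snd d + snd b') mod p" using e2 1 by (simp add: add.commute)
      then have "snd b mod p = snd b' mod p" by (rule mod_cancel_nat)
      then have "snd b = snd b'" using bb by simp
      then show False using f b(3) by (simp add: prod_eq_iff)
    next
      case 2
      define s where "s = t' - t"
      have t': "t' = t + s" using 2 by (simp add: s_def)
      have sp: "\<not> p dvd s" using 2 tt by (simp add: s_def nat_dvd_not_less)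
      have "(t * fst d + fst b) mod p^2 = (t * fst d + (fst b' + s * fst d)) mod p^2"
        using e1 by (simp add: t' algebra_simps)
      then have f1: "fst b mod p^2 = (fst b' + s * fst d) mod p^2" by (rule mod_cancel_nat)
      have "(t * snd d + snd b) mod p = (t * snd d + (snd b' + s * snd d)) mod p"
        using e2 by (simp add: t' algebra_simps)
      then have f2: "snd b mod p = (snd b' + s * snd d) mod p" by (rule mod_cancel_nat)
      show False
        by (rule notE[OF H], rule bexI[of _ b'], rule bexI[of _ b], intro conjI exI[of _ s])
          (use b sp f1 f2 in auto)
    next
      case 3
      define s where "s = t - t'"
      have t: "t = t' + s" using 3 by (simp add: s_def)
      have sp: "\<not> p dvd s" using 3 tt by (simp add: s_def nat_dvd_not_less)
      have "(t' * fst d + fst b') mod p^2 = (t' * fst d + (fst b + s * fst d)) mod p^2"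
        using e1 by (simp add: t algebra_simps)
      then have f1: "fst b' mod p^2 = (fst b + s * fst d) mod p^2" by (rule mod_cancel_nat)
      have "(t' * snd d + snd b') mod p = (t' * snd d + (snd b + s * snd d)) mod p"
        using e2 by (simp add: t algebra_simps)
      then have f2: "snd b' mod p = (snd b + s * snd d) mod p" by (rule mod_cancel_nat)
      show False
        by (rule notE[OF H], rule bexI[of _ b], rule bexI[of _ b'], intro conjI exI[of _ s])
          (use b sp f1 f2 in auto)
    qed
  qed
  have finB: "finite B" using B finite_grp finite_subset by blast
  have finT: "\<forall>b\<in>B. finite (T b)" by (simp add: T_def)
  have disj': "\<forall>b\<in>B. \<forall>b'\<in>B. b \<noteq> b' \<longrightarrow> T b \<inter> T b' = {}" using disj by blast
  have "card (\<Union>b\<in>B. T b) = (\<Sum>b\<in>B. card (T b))"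
    by (rule card_UN_disjoint[OF finB finT disj'])
  also have "\<dots> = card B * p" by (simp add: cardT)
  finally have c1: "card (\<Union>b\<in>B. T b) = card B * p" .
  have "card (\<Union>b\<in>B. T b) \<le> card (grp p)"
    by (rule card_mono[OF finite_grp]) (use Tsub in blast)
  then have "card B * p \<le> p^2 * p" using c1 card_grp by simp
  then have "card B \<le> p^2" using p0 by simp
  then show False using cB by simp
qed

lemma phi_cong:
  fixes p a1 a2 b1 b1' b2 b2' s d1 d2 :: nat
  assumes p0: "p > 0"
    and e1: "b1' mod p^2 = (b1 + s * d1) mod p^2" and e2: "b2' mod p = (b2 + s * d2) mod p"
  shows "(a1 * b1' + p * (a2 * b2')) mod p^2
       = (a1 * b1 + p * (a2 * b2) + s * (a1 * d1 + p * (a2 * d2))) mod p^2"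
proof -
  have x1: "(a1 * b1') mod p^2 = (a1 * (b1 + s * d1)) mod p^2"
  proof -
    have "(a1 * b1') mod p^2 = (a1 * (b1' mod p^2)) mod p^2" by (simp add: mod_mult_right_eq)
    also have "\<dots> = (a1 * ((b1 + s * d1) mod p^2)) mod p^2" by (simp only: e1)
    also have "\<dots> = (a1 * (b1 + s * d1)) mod p^2" by (simp add: mod_mult_right_eq)
    finally show ?thesis .
  qed
  have "(a2 * b2') mod p = (a2 * (b2 + s * d2)) mod p"
  proof -
    have "(a2 * b2') mod p = (a2 * (b2' mod p)) mod p" by (simp add: mod_mult_right_eq)
    also have "\<dots> = (a2 * ((b2 + s * d2) mod p)) mod p" by (simp only: e2)
    also have "\<dots> = (a2 * (b2 + s * d2)) mod p" by (simp add: mod_mult_right_eq)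
    finally show ?thesis .
  qed
  then have "p * ((a2 * b2') mod p) = p * ((a2 * (b2 + s * d2)) mod p)" by simp
  then have x2: "(p * (a2 * b2')) mod p^2 = (p * (a2 * (b2 + s * d2))) mod p^2"
    by (simp add: power2_eq_square mod_mult_mult1)
  have "(a1 * b1' + p * (a2 * b2')) mod p^2 = (a1 * (b1 + s * d1) + p * (a2 * (b2 + s * d2))) mod p^2"
    using x1 x2 by (rule mod_add_cong)
  also have "a1 * (b1 + s * d1) + p * (a2 * (b2 + s * d2))
      = a1 * b1 + p * (a2 * b2) + s * (a1 * d1 + p * (a2 * d2))" by (simp add: algebra_simps)
  finally show ?thesis .
qed

lemma zsum1:
  assumes p0: "p > 0" and a: "a < p^2"
  shows "(\<Sum>k<p^2. (zz p ^ a) ^ k) = (if a = 0 then of_nat (p^2) else 0)"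
proof (cases "a = 0")
  case False
  have "(zz p ^ a) ^ (p^2) = 1" using zz_pow_eq_1[OF p0] by (simp add: power_mult[symmetric])
  moreover have "zz p ^ a \<noteq> 1" using zz_pow_eq_1[OF p0, of a] a False
    by (meson nat_dvd_not_less not_gr0)
  ultimately show ?thesis using False geo_zero by simp
qed simp

lemma zsum2:
  assumes p0: "p > 0" and a: "a < p"
  shows "(\<Sum>k<p. (zz p ^ (p * a)) ^ k) = (if a = 0 then of_nat p else 0)"
proof (cases "a = 0")
  case False
  have "(zz p ^ (p*a)) ^ p = 1" using zz_pow_eq_1[OF p0]
    by (simp add: power_mult[symmetric] power2_eq_square mult_ac)
  moreover have "zz p ^ (p*a) \<noteq> 1"
  proof
    assume "zz p ^ (p*a) = 1"
    then have "p * p dvd p * a" using zz_pow_eq_1[OF p0] by (simp add: power2_eq_square)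
    then have "p dvd a" using p0 by simp
    then show False using a False by (meson nat_dvd_not_less not_gr0)
  qed
  ultimately show ?thesis using False geo_zero by simp
qed simp

lemma sum_delta_mult:
  assumes "finite A" "x \<in> A"
  shows "(\<Sum>a\<in>A. (if a = x then 1 else 0) * g a) = (g x :: complex)"
proof -
  have "(\<Sum>a\<in>A. (if a = x then 1 else 0) * g a) = (\<Sum>a\<in>A. if a = x then g a else 0)"
    by (rule sum.cong) auto
  also have "\<dots> = g x" using assms by (simp add: sum.delta)
  finally show ?thesis .
qed

theorem lemma5p2:
  fixes p :: nat and A :: "(nat \<times> nat) set"
  assumes "prime p"
    and "A \<subseteq> grp p"
    and "spectral p A"
    and "card A > p^2"
  shows "A = grp p"
proof -
  note pr = assms(1)
  have p0: "p > 0" using pr prime_gt_0_nat by blast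
  obtain B where B: "B \<subseteq> grp p"
    and orth: "\<forall>b\<in>B. \<forall>b'\<in>B. b \<noteq> b' \<longrightarrow> l2_inner A (chr p b) (chr p b') = 0"
    and span: "\<forall>f :: nat \<times> nat \<Rightarrow> complex. \<exists>c :: nat \<times> nat \<Rightarrow> complex.
            \<forall>a\<in>A. f a = (\<Sum>b\<in>B. c b * chr p b a)"
  proof -
    have "\<exists>B. B \<subseteq> grp p \<and>
        (\<forall>b\<in>B. \<forall>b'\<in>B. b \<noteq> b' \<longrightarrow> l2_inner A (chr p b) (chr p b') = 0) \<and>
        (\<forall>f :: nat \<times> nat \<Rightarrow> complex. \<exists>c :: nat \<times> nat \<Rightarrow> complex.
            \<forall>a\<in>A. f a = (\<Sum>b\<in>B. c b * chr p b a))"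
      using assms(3) unfolding spectral_def by (rule conjunct2)
    then show ?thesis using that by (elim exE conjE) assumption
  qed
  have finA: "finite A" using assms(2) finite_grp finite_subset by blast
  have finB: "finite B" using B finite_grp finite_subset by blast
  have cA0: "card A \<noteq> 0" using assms(4) by simp
  then have Ane: "A \<noteq> {}" by auto
  have chr1: "chr p b a * cnj (chr p b a) = 1" for b a
    by (simp only: chr_zz[OF p0] zz_cnj)
  have chr1': "cnj (chr p b a) * chr p b a = 1" for b a
    using chr1[of b a] by (simp only: mult.commute)
  define \<phi> where "\<phi> d a = fst a * fst d + p * (snd a * snd d)" for d a :: "nat \<times> nat"
  obtain a0 where a0: "a0 \<in> A" using Ane by blast
  have "\<exists>c. \<forall>a\<in>A. (if a = a0 then (1::complex) else 0) = (\<Sum>b\<in>B. c b * chr p b a)"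
    using spec[OF span, of "\<lambda>a. if a = a0 then (1::complex) else 0"] by simp
  then obtain c where c: "\<forall>a\<in>A. (if a = a0 then (1::complex) else 0) = (\<Sum>b\<in>B. c b * chr p b a)"
    by blast
  have inner: "(\<Sum>a\<in>A. chr p b a * cnj (chr p b' a)) = (if b = b' then of_nat (card A) else 0)"
    if "b \<in> B" "b' \<in> B" for b b'
  proof (cases "b = b'")
    case True then show ?thesis by (simp add: chr1)
  next
    case False then show ?thesis using orth that by (simp add: l2_inner_def)
  qed
  have cb: "c b' * of_nat (card A) = cnj (chr p b' a0)" if b': "b' \<in> B" for b'
  proof -
    have "cnj (chr p b' a0) = (\<Sum>a\<in>A. (if a = a0 then 1 else 0) * cnj (chr p b' a))"
      using sum_delta_mult[OF finA a0] by simp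
    also have "\<dots> = (\<Sum>a\<in>A. (\<Sum>b\<in>B. c b * chr p b a) * cnj (chr p b' a))"
      using c by (intro sum.cong) auto
    also have "\<dots> = (\<Sum>a\<in>A. \<Sum>b\<in>B. c b * (chr p b a * cnj (chr p b' a)))"
      by (simp add: sum_distrib_right mult.assoc)
    also have "\<dots> = (\<Sum>b\<in>B. \<Sum>a\<in>A. c b * (chr p b a * cnj (chr p b' a)))"
      by (rule sum.swap)
    also have "\<dots> = (\<Sum>b\<in>B. c b * (\<Sum>a\<in>A. chr p b a * cnj (chr p b' a)))"
      by (simp add: sum_distrib_left)
    also have "\<dots> = (\<Sum>b\<in>B. c b * (if b = b' then of_nat (card A) else 0))"
      using inner b' by (intro sum.cong) auto
    also have "\<dots> = (\<Sum>b\<in>B. if b = b' then c b * of_nat (card A) else 0)"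
      by (rule sum.cong) auto
    also have "\<dots> = c b' * of_nat (card A)" using finB b' by (simp add: sum.delta)
    finally show ?thesis by simp
  qed
  have "1 = (\<Sum>b\<in>B. c b * chr p b a0)" using c a0 by auto
  also have "\<dots> = (\<Sum>b\<in>B. cnj (chr p b a0) * chr p b a0 / of_nat (card A))"
  proof (rule sum.cong[OF refl])
    fix b assume "b \<in> B"
    then have "c b = cnj (chr p b a0) / of_nat (card A)" using cb cA0 by (simp add: eq_divide_eq)
    then show "c b * chr p b a0 = cnj (chr p b a0) * chr p b a0 / of_nat (card A)" by simp
  qed
  also have "\<dots> = of_nat (card B) / of_nat (card A)"
    using chr1' by simp
  finally have "of_nat (card A) = (of_nat (card B) :: complex)" using cA0 by (simp add: field_simps)
  then have cAB: "card B = card A" by simp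
  (* zeros of the Fourier transform *)
  have cB: "card B > p^2" using assms(4) cAB by simp
  have chr\<phi>: "chr p b a = zz p ^ \<phi> b a" for b a by (simp add: chr_zz[OF p0] \<phi>_def)
  have zero: "(\<Sum>a\<in>A. zz p ^ \<phi> d a) = 0" if d: "d \<in> grp p" "d \<noteq> (0,0)" for d
  proof -
    obtain b b' s where bb: "b \<in> B" "b' \<in> B" "b \<noteq> b'" and s: "\<not> p dvd s"
      and e1: "fst b' mod p^2 = (fst b + s * fst d) mod p^2"
      and e2: "snd b' mod p = (snd b + s * snd d) mod p"
      using pigeon[OF pr B cB d] by (elim bexE exE conjE) fast
    have "0 = l2_inner A (chr p b') (chr p b)" using orth bb by auto
    also have "\<dots> = (\<Sum>a\<in>A. (zz p ^ s) ^ \<phi> d a)"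
      unfolding l2_inner_def
    proof (rule sum.cong[OF refl])
      fix a
      have m: "\<phi> b' a mod p^2 = (\<phi> b a + s * \<phi> d a) mod p^2"
        unfolding \<phi>_def by (rule phi_cong[OF p0 e1 e2])
      have "zz p ^ \<phi> b' a = zz p ^ (\<phi> b' a mod p^2)" by (rule zz_mod[OF p0])
      also have "\<dots> = zz p ^ ((\<phi> b a + s * \<phi> d a) mod p^2)" by (simp only: m)
      also have "\<dots> = zz p ^ (\<phi> b a + s * \<phi> d a)" by (rule zz_mod[OF p0, symmetric])
      finally have "zz p ^ \<phi> b' a = zz p ^ (\<phi> b a + s * \<phi> d a)" .
      then have "chr p b' a * cnj (chr p b a) = zz p ^ (\<phi> b a + s * \<phi> d a) * cnj (zz p ^ \<phi> b a)"
        by (simp only: chr\<phi>)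
      also have "\<dots> = zz p ^ (s * \<phi> d a) * (zz p ^ \<phi> b a * cnj (zz p ^ \<phi> b a))"
        by (simp only: power_add mult_ac)
      also have "\<dots> = (zz p ^ s) ^ \<phi> d a" by (simp only: zz_cnj power_mult mult_1_right)
      finally show "chr p b' a * cnj (chr p b a) = (zz p ^ s) ^ \<phi> d a" .
    qed
    finally have "(\<Sum>a\<in>A. (zz p ^ s) ^ \<phi> d a) = 0" by (rule sym)
    then show ?thesis by (rule galois[OF pr s])
  qed
  (* Fourier inversion at 0 *)
  define S where "S d = (\<Sum>a\<in>A. zz p ^ \<phi> d a)" for d
  have mem: "(0,0) \<in> grp p" using p0 by (simp add: grp_def)
  have "(\<Sum>d\<in>grp p. S d) = S (0,0) + (\<Sum>d\<in>grp p - {(0,0)}. S d)"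
    by (rule sum.remove[OF finite_grp mem])
  also have "(\<Sum>d\<in>grp p - {(0,0)}. S d) = 0"
    by (rule sum.neutral) (use zero in \<open>auto simp: S_def\<close>)
  also have "S (0,0) = of_nat (card A)" by (simp add: S_def \<phi>_def)
  finally have t1: "(\<Sum>d\<in>grp p. S d) = of_nat (card A)" by simp
  have inner2: "(\<Sum>d\<in>grp p. zz p ^ \<phi> d a) = (if a = (0,0) then of_nat (p^2 * p) else 0)"
    if a: "a \<in> A" for a
  proof -
    have a1: "fst a < p^2" and a2: "snd a < p" using a assms(2) by (auto simp: grp_def)
    have tm: "zz p ^ \<phi> (d1,d2) a = (zz p ^ fst a) ^ d1 * (zz p ^ (p * snd a)) ^ d2" for d1 d2
      by (simp only: \<phi>_def fst_conv snd_conv power_add power_mult mult.assoc mult.commute[of d2])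
    have "(\<Sum>d\<in>grp p. zz p ^ \<phi> d a) = (\<Sum>(d1,d2)\<in>{..<p^2}\<times>{..<p}. zz p ^ \<phi> (d1,d2) a)"
      by (simp add: grp_def)
    also have "\<dots> = (\<Sum>d1<p^2. \<Sum>d2<p. zz p ^ \<phi> (d1,d2) a)"
      by (rule sum.cartesian_product[symmetric])
    also have "\<dots> = (\<Sum>d1<p^2. \<Sum>d2<p. (zz p ^ fst a) ^ d1 * (zz p ^ (p * snd a)) ^ d2)"
      by (simp only: tm)
    also have "\<dots> = (\<Sum>d1<p^2. (zz p ^ fst a) ^ d1) * (\<Sum>d2<p. (zz p ^ (p * snd a)) ^ d2)"
      by (rule sum_product[symmetric])
    also have "\<dots> = (if fst a = 0 then of_nat (p^2) else 0) * (if snd a = 0 then of_nat p else 0)"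
      by (simp only: zsum1[OF p0 a1] zsum2[OF p0 a2])
    also have "\<dots> = (if a = (0,0) then of_nat (p^2 * p) else 0)"
      by (cases a) simp
    finally show ?thesis .
  qed
  have "(\<Sum>d\<in>grp p. S d) = (\<Sum>a\<in>A. \<Sum>d\<in>grp p. zz p ^ \<phi> d a)"
    unfolding S_def by (rule sum.swap)
  also have "\<dots> = (\<Sum>a\<in>A. if a = (0,0) then of_nat (p^2 * p) else 0)"
    by (rule sum.cong[OF refl]) (rule inner2)
  also have "\<dots> = (if (0,0) \<in> A then of_nat (p^2 * p) else 0)"
    by (rule sum.delta[OF finA])
  finally have "of_nat (card A) = (if (0,0) \<in> A then of_nat (p^2 * p) else (0::complex))"
    using t1 by simp
  moreover have "(0,0) \<in> A"
  proof (rule ccontr)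
    assume "(0,0) \<notin> A"
    with calculation have "of_nat (card A) = (0::complex)" by simp
    then show False using cA0 by simp
  qed
  ultimately have "of_nat (card A) = (of_nat (p^2 * p) :: complex)" by simp
  then have "card A = p^2 * p" by (simp only: of_nat_eq_iff)
  then have "card A = card (grp p)" by (simp add: card_grp)
  then show ?thesis using card_subset_eq[OF finite_grp assms(2)] by simp
qed

end
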